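(* Let $\mathcal{G}_{N,M}=\{G_s\}$ be the set of simple undirected networks on node set $\{1,\dots,N\}$ with exactly $M$ edges (no self-edges, no repeated edges), and let $G^{(0)}\in\mathcal{G}_{N,M}$. For $t\ge 0$ let $\mathbf{G}^{(t)}=(\mathcal{G}_{N,M},\pi^{(t)})$ be the random-network ensemble where $\pi^{(t)}_s$ is the probability that the network obtained from $G^{(0)}$ by $t$ successive independent uniform rewires equals $G_s$. Then $\lim_{t\to\infty}\mathbf{G}^{(t)}=\mathbf{G}_{N,M}$, where $\mathbf{G}_{N,M}=(\mathcal{G}_{N,M},\pi)$ is the Erdős–Rényi ensemble with $\pi_s=1/|\mathcal{G}_{N,M}|$ for all $s$.
   Context: A random-network ensemble is a pair $(\{G_s\},\pi)$ of a finite set of networks and a probability distribution $\pi$ on it. A sequence of ensembles $\mathbf{G}^{(t)}=(\{G_s\},\pi^{(t)})$ converges to $\mathbf{G}=(\{G_s\},\pi)$ iff $\pi^{(t)}\to\pi$. Uniform rewiring is the stochastic map on $\mathcal{G}_{N,M}$ taking a network with edge set $\mathcal{E}$ to the network with edge set $(\mathcal{E}\setminus\{(i,j)\})\cup\{(i',j')\}$, where $(i,j)$ is chosen uniformly at random from $\mathcal{E}$, and then $(i',j')$ is chosen uniformly at random among the $N(N-1)/2-M+1$ node pairs that are not edges of $\mathcal{E}\setminus\{(i,j)\}$ (re-selecting $(i,j)$ allowed). *)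

theory Defs
  imports "HOL-Probability.Probability"
begin

definition node_pairs :: "nat \<Rightarrow> nat set set" where
  "node_pairs N = {{i, j} | i j. i \<in> {1..N} \<and> j \<in> {1..N} \<and> i \<noteq> j}"

definition networks :: "nat \<Rightarrow> nat \<Rightarrow> nat set set set" where
  "networks N M = {E. E \<subseteq> node_pairs N \<and> card E = M}"

text \<open>Uniform rewiring: remove a uniformly chosen edge, then add a uniformly chosen
  pair among the non-edges of the remaining network (re-selecting the removed one allowed).
  For the empty network (M = 0) there is no edge to remove; it is left unchanged.\<close>
definition rewire :: "nat \<Rightarrow> nat set set \<Rightarrow> nat set set pmf" where
  "rewire N E = (if E = {} then return_pmf E else
     do { e \<leftarrow> pmf_of_set E;
          e' \<leftarrow> pmf_of_set (node_pairs N - (E - {e}));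
          return_pmf ((E - {e}) \<union> {e'}) })"

definition rewire_iter :: "nat \<Rightarrow> nat set set \<Rightarrow> nat \<Rightarrow> nat set set pmf" where
  "rewire_iter N G0 t = ((\<lambda>p. bind_pmf p (rewire N)) ^^ t) (return_pmf G0)"

end

theory Submission
  imports Defs
begin


lemma finite_node_pairs: "finite (node_pairs N)"
proof -
  have "node_pairs N \<subseteq> Pow {1..N}" unfolding node_pairs_def by auto
  thus ?thesis by (rule finite_subset) simp
qed

lemma finite_networks: "finite (networks N M)"
proof -
  have "networks N M \<subseteq> Pow (node_pairs N)" unfolding networks_def by auto
  thus ?thesis using finite_node_pairs by (rule finite_subset[OF _ finite_Pow_iff[THEN iffD2]])
qed

lemma net_finite: "E \<in> networks N M \<Longrightarrow> finite E"
  unfolding networks_def using finite_node_pairs finite_subset by blast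

lemma net_le: "E \<in> networks N M \<Longrightarrow> M \<le> card (node_pairs N)"
  unfolding networks_def using finite_node_pairs card_mono by blast

lemma card_Ae:
  assumes E: "E \<in> networks N M" and e: "e \<in> E"
  shows "card (node_pairs N - (E - {e})) = card (node_pairs N) - M + 1"
proof -
  have fin: "finite E" using net_finite[OF E] .
  have sub: "E - {e} \<subseteq> node_pairs N" using E unfolding networks_def by auto
  have "card (node_pairs N - (E - {e})) = card (node_pairs N) - card (E - {e})"
    using card_Diff_subset[OF finite_subset[OF sub finite_node_pairs] sub] .
  moreover have "card (E - {e}) = M - 1" using E e fin unfolding networks_def by auto
  moreover have "0 < card E" using fin e card_gt_0_iff by blast
  hence "M \<ge> 1" using E unfolding networks_def by simp
  moreover have "M \<le> card (node_pairs N)" using net_le[OF E] .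
  ultimately show ?thesis by simp
qed

lemma Ae_ne: "E \<in> networks N M \<Longrightarrow> e \<in> E \<Longrightarrow> node_pairs N - (E - {e}) \<noteq> {}"
  unfolding networks_def by auto

lemma rewire_support:
  assumes E: "E \<in> networks N M"
  shows "set_pmf (rewire N E) \<subseteq> networks N M"
proof (cases "E = {}")
  case True thus ?thesis using E by (simp add: rewire_def)
next
  case False
  have fin: "finite E" using net_finite[OF E] .
  show ?thesis
  proof
    fix F assume "F \<in> set_pmf (rewire N E)"
    then obtain e e' where e: "e \<in> E" and e': "e' \<in> node_pairs N - (E - {e})"
      and F: "F = (E - {e}) \<union> {e'}"
      using False fin Ae_ne[OF E] finite_node_pairs
      by (auto simp: rewire_def set_bind_pmf set_pmf_of_set)
    have "card F = card (E - {e}) + 1" using F e' fin by simp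
    also have "\<dots> = M"
    proof -
      have "0 < card E" using fin e card_gt_0_iff by blast
      thus ?thesis using E e fin unfolding networks_def by simp
    qed
    finally show "F \<in> networks N M" using F e' E unfolding networks_def by auto
  qed
qed

lemma iter_Suc: "rewire_iter N G0 (Suc t) = bind_pmf (rewire_iter N G0 t) (rewire N)"
  by (simp add: rewire_iter_def)

lemma iter_support:
  assumes "G0 \<in> networks N M"
  shows "set_pmf (rewire_iter N G0 t) \<subseteq> networks N M"
proof (induction t)
  case 0 thus ?case using assms by (simp add: rewire_iter_def)
next
  case (Suc t) thus ?case using rewire_support by (fastforce simp: iter_Suc set_bind_pmf)
qed




definition Pairs :: "nat \<Rightarrow> nat set set \<Rightarrow> nat set set \<Rightarrow> (nat set \<times> nat set) set" where
  "Pairs N E F = Sigma E (\<lambda>e. {e' \<in> node_pairs N - (E - {e}). (E - {e}) \<union> {e'} = F})"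

lemma finite_Pairs: "finite E \<Longrightarrow> finite (Pairs N E F)"
  unfolding Pairs_def by (rule finite_SigmaI, assumption, rule finite_subset[OF _ finite_node_pairs], blast)

lemma pmf_rewire:
  assumes E: "E \<in> networks N M" and ne: "E \<noteq> {}"
  shows "pmf (rewire N E) F = real (card (Pairs N E F)) / (real M * real (card (node_pairs N) - M + 1))"
proof -
  have fin: "finite E" using net_finite[OF E] .
  let ?D = "real (card (node_pairs N) - M + 1)"
  have inner: "pmf (pmf_of_set (node_pairs N - (E - {e})) \<bind> (\<lambda>e'. return_pmf ((E - {e}) \<union> {e'}))) F
      = real (card {e' \<in> node_pairs N - (E - {e}). (E - {e}) \<union> {e'} = F}) / ?D" if e: "e \<in> E" for e
  proof -
    have "pmf (pmf_of_set (node_pairs N - (E - {e})) \<bind> (\<lambda>e'. return_pmf ((E - {e}) \<union> {e'}))) F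
       = (\<Sum>e'\<in>node_pairs N - (E - {e}). indicat_real {F} ((E - {e}) \<union> {e'})) / real (card (node_pairs N - (E - {e})))"
      using Ae_ne[OF E e] finite_node_pairs by (simp add: pmf_bind integral_pmf_of_set pmf_return)
    also have "(\<Sum>e'\<in>node_pairs N - (E - {e}). indicat_real {F} ((E - {e}) \<union> {e'}))
       = real (card {e' \<in> node_pairs N - (E - {e}). (E - {e}) \<union> {e'} = F})"
      using finite_node_pairs by (simp add: indicator_def sum.If_cases Int_def)
    finally show ?thesis using card_Ae[OF E e] by simp
  qed
  have "pmf (rewire N E) F = (\<Sum>e\<in>E. real (card {e' \<in> node_pairs N - (E - {e}). (E - {e}) \<union> {e'} = F}) / ?D) / real (card E)"
    using ne fin inner by (simp add: rewire_def pmf_bind integral_pmf_of_set)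
  also have "\<dots> = (\<Sum>e\<in>E. real (card {e' \<in> node_pairs N - (E - {e}). (E - {e}) \<union> {e'} = F})) / ?D / real M"
    using E unfolding networks_def by (simp add: sum_divide_distrib)
  also have "(\<Sum>e\<in>E. real (card {e' \<in> node_pairs N - (E - {e}). (E - {e}) \<union> {e'} = F})) = real (card (Pairs N E F))"
    unfolding Pairs_def using fin finite_node_pairs by (simp add: card_SigmaI)
  finally show ?thesis by simp
qed

lemma Pairs_swap:
  assumes E: "E \<in> networks N M"
  shows "prod.swap ` Pairs N E F \<subseteq> Pairs N F E"
proof
  fix z assume "z \<in> prod.swap ` Pairs N E F"
  then obtain e e' where z: "z = (e', e)" and p: "(e, e') \<in> Pairs N E F" by auto
  have e: "e \<in> E" and e'1: "e' \<in> node_pairs N" and e'2: "e' \<notin> E - {e}"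
    and F: "(E - {e}) \<union> {e'} = F" using p unfolding Pairs_def by simp_all
  have eP: "e \<in> node_pairs N" using E e unfolding networks_def by blast
  have "F - {e'} = E - {e}" using F e'2 by blast
  hence "(F - {e'}) \<union> {e} = E" using e by blast
  moreover have "e' \<in> F" using F by blast
  moreover have "e \<notin> F - {e'}" using \<open>F - {e'} = E - {e}\<close> by blast
  ultimately show "z \<in> Pairs N F E" unfolding Pairs_def using z eP by simp
qed

lemma card_Pairs_sym:
  assumes E: "E \<in> networks N M" and F: "F \<in> networks N M"
  shows "card (Pairs N E F) = card (Pairs N F E)"
proof -
  have "card (Pairs N E F) \<le> card (Pairs N F E)"
    using card_mono[OF finite_Pairs[OF net_finite[OF F]] Pairs_swap[OF E]]
    by (simp add: card_image)
  moreover have "card (Pairs N F E) \<le> card (Pairs N E F)"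
    using card_mono[OF finite_Pairs[OF net_finite[OF E]] Pairs_swap[OF F]]
    by (simp add: card_image)
  ultimately show ?thesis by simp
qed

lemma net_empty_iff: assumes "E \<in> networks N M" shows "(E = {}) = (M = 0)"
proof -
  have "finite E" using net_finite[OF assms] .
  moreover have "card E = M" using assms unfolding networks_def by simp
  ultimately show ?thesis by (metis card_eq_0_iff)
qed

lemma pmf_rewire_sym:
  assumes E: "E \<in> networks N M" and F: "F \<in> networks N M" and M: "M > 0"
  shows "pmf (rewire N E) F = pmf (rewire N F) E"
  using pmf_rewire[OF E] pmf_rewire[OF F] card_Pairs_sym[OF E F] net_empty_iff[OF E] net_empty_iff[OF F] M
  by simp

lemma pmf_rewire_lb:
  assumes E: "E \<in> networks N M" and M: "M > 0" and a: "a \<in> E" and b: "b \<in> node_pairs N - (E - {a})"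
  shows "pmf (rewire N E) ((E - {a}) \<union> {b}) \<ge> 1 / (real M * real (card (node_pairs N) - M + 1))"
proof -
  have "(a, b) \<in> Pairs N E ((E - {a}) \<union> {b})" unfolding Pairs_def using a b by auto
  hence "card (Pairs N E ((E - {a}) \<union> {b})) > 0"
    using finite_Pairs[OF net_finite[OF E]] card_gt_0_iff by blast
  moreover have "E \<noteq> {}" using a by auto
  ultimately show ?thesis using pmf_rewire[OF E] M
    by (simp add: frac_le)
qed




primrec Kk :: "nat \<Rightarrow> nat \<Rightarrow> nat \<Rightarrow> nat set set \<Rightarrow> nat set set \<Rightarrow> real" where
  "Kk N M 0 y x = (if x = y then 1 else 0)"
| "Kk N M (Suc m) y x = (\<Sum>z\<in>networks N M. pmf (rewire N y) z * Kk N M m z x)"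

lemma iter_step:
  assumes G0: "G0 \<in> networks N M" and y: "y \<in> networks N M" and M: "M > 0"
  shows "pmf (rewire_iter N G0 (Suc t)) y
       = (\<Sum>x\<in>networks N M. pmf (rewire N y) x * pmf (rewire_iter N G0 t) x)"
proof -
  have "pmf (rewire_iter N G0 (Suc t)) y
      = (\<Sum>x\<in>networks N M. pmf (rewire N x) y * pmf (rewire_iter N G0 t) x)"
    unfolding iter_Suc pmf_bind
    by (rule integral_measure_pmf_real[OF finite_networks]) (use iter_support[OF G0] in blast)
  also have "\<dots> = (\<Sum>x\<in>networks N M. pmf (rewire N y) x * pmf (rewire_iter N G0 t) x)"
    by (rule sum.cong) (simp_all add: pmf_rewire_sym[OF _ y M])
  finally show ?thesis .
qed

lemma Kk_nonneg: "Kk N M m y x \<ge> 0"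
  by (induction m arbitrary: y) (auto intro!: sum_nonneg)

lemma Kk_sum: "y \<in> networks N M \<Longrightarrow> (\<Sum>x\<in>networks N M. Kk N M m y x) = 1"
proof (induction m arbitrary: y)
  case 0 thus ?case using finite_networks by simp
next
  case (Suc m)
  have "(\<Sum>x\<in>networks N M. Kk N M (Suc m) y x)
      = (\<Sum>x\<in>networks N M. \<Sum>z\<in>networks N M. pmf (rewire N y) z * Kk N M m z x)" by simp
  also have "\<dots> = (\<Sum>z\<in>networks N M. \<Sum>x\<in>networks N M. pmf (rewire N y) z * Kk N M m z x)"
    by (rule sum.swap)
  also have "\<dots> = (\<Sum>z\<in>networks N M. pmf (rewire N y) z * (\<Sum>x\<in>networks N M. Kk N M m z x))"
    by (simp add: sum_distrib_left)
  also have "\<dots> = (\<Sum>z\<in>networks N M. pmf (rewire N y) z)"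
    by (rule sum.cong) (simp_all add: Suc.IH)
  also have "\<dots> = 1" by (rule sum_pmf_eq_1[OF finite_networks rewire_support[OF Suc.prems]])
  finally show ?case .
qed

lemma iter_Kk:
  assumes G0: "G0 \<in> networks N M" and M: "M > 0"
  shows "y \<in> networks N M \<Longrightarrow> pmf (rewire_iter N G0 (t + m)) y
       = (\<Sum>x\<in>networks N M. Kk N M m y x * pmf (rewire_iter N G0 t) x)"
proof (induction m arbitrary: y)
  case 0
  have "(\<Sum>x\<in>networks N M. Kk N M 0 y x * pmf (rewire_iter N G0 t) x)
     = (\<Sum>x\<in>networks N M. if x = y then pmf (rewire_iter N G0 t) x else 0)"
    by (rule sum.cong) auto
  thus ?case using finite_networks 0 by (simp add: sum.delta')
next
  case (Suc m)
  have "pmf (rewire_iter N G0 (t + Suc m)) y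
      = (\<Sum>z\<in>networks N M. pmf (rewire N y) z * pmf (rewire_iter N G0 (t + m)) z)"
    using iter_step[OF G0 Suc.prems M] by simp
  also have "\<dots> = (\<Sum>z\<in>networks N M. pmf (rewire N y) z *
        (\<Sum>x\<in>networks N M. Kk N M m z x * pmf (rewire_iter N G0 t) x))"
    by (rule sum.cong) (simp_all add: Suc.IH)
  also have "\<dots> = (\<Sum>z\<in>networks N M. \<Sum>x\<in>networks N M. pmf (rewire N y) z * Kk N M m z x * pmf (rewire_iter N G0 t) x)"
    by (simp add: sum_distrib_left mult.assoc)
  also have "\<dots> = (\<Sum>x\<in>networks N M. \<Sum>z\<in>networks N M. pmf (rewire N y) z * Kk N M m z x * pmf (rewire_iter N G0 t) x)"
    by (rule sum.swap)
  also have "\<dots> = (\<Sum>x\<in>networks N M. Kk N M (Suc m) y x * pmf (rewire_iter N G0 t) x)"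
    by (simp add: sum_distrib_right)
  finally show ?case .
qed




lemma net_eq_if_sub:
  assumes x: "x \<in> networks N M" and y: "y \<in> networks N M" and "x \<subseteq> y"
  shows "x = y"
  using card_subset_eq[OF net_finite[OF y] assms(3)] x y unfolding networks_def by simp

lemma intermediate:
  assumes x: "x \<in> networks N M" and y: "y \<in> networks N M" and M: "M > 0"
    and d: "card (x - y) \<le> Suc m"
  shows "\<exists>g. pmf (rewire N x) g \<ge> 1 / (real M * real (card (node_pairs N) - M + 1))
           \<and> card (g - y) \<le> m"
proof (cases "x = y")
  case True
  have "x \<noteq> {}" using net_empty_iff[OF x] M by simp
  then obtain a where a: "a \<in> x" by blast
  have aP: "a \<in> node_pairs N - (x - {a})" using x a unfolding networks_def by auto
  have "(x - {a}) \<union> {a} = x" using a by blast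
  thus ?thesis using pmf_rewire_lb[OF x M a aP] True by (intro exI[of _ x]) simp
next
  case False
  have "\<not> x \<subseteq> y" using net_eq_if_sub[OF x y] False by blast
  then obtain a where a: "a \<in> x" "a \<notin> y" by blast
  have "\<not> y \<subseteq> x" using net_eq_if_sub[OF y x] False by blast
  then obtain b where b: "b \<in> y" "b \<notin> x" by blast
  have bP: "b \<in> node_pairs N - (x - {a})" using y b unfolding networks_def by auto
  have "(x - {a} \<union> {b}) - y = (x - y) - {a}" using b by blast
  hence "card ((x - {a} \<union> {b}) - y) = card (x - y) - 1"
    using a net_finite[OF x] by simp
  hence "card ((x - {a} \<union> {b}) - y) \<le> m" using d by simp
  thus ?thesis using pmf_rewire_lb[OF x M a(1) bP] by blast
qed

lemma doeblin:
  assumes M: "M > 0"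
  shows "x \<in> networks N M \<Longrightarrow> y \<in> networks N M \<Longrightarrow> card (x - y) \<le> m \<Longrightarrow>
     Kk N M m x y \<ge> (1 / (real M * real (card (node_pairs N) - M + 1))) ^ m"
proof (induction m arbitrary: x)
  case 0
  have "x \<subseteq> y" using 0 net_finite[of x N M] by auto
  hence "x = y" using net_eq_if_sub 0 by blast
  thus ?case by simp
next
  case (Suc m)
  let ?c = "1 / (real M * real (card (node_pairs N) - M + 1))"
  obtain g where g1: "pmf (rewire N x) g \<ge> ?c" and g2: "card (g - y) \<le> m"
    using intermediate[OF Suc.prems(1,2) M Suc.prems(3)] by blast
  have c0: "?c > 0" using M by simp
  hence "pmf (rewire N x) g > 0" using g1 by linarith
  hence gS: "g \<in> networks N M" using rewire_support[OF Suc.prems(1)] by (auto simp: set_pmf_eq)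
  have IH: "Kk N M m g y \<ge> ?c ^ m" using Suc.IH[OF gS Suc.prems(2) g2] .
  have "?c ^ Suc m = ?c * ?c ^ m" by simp
  also have "\<dots> \<le> pmf (rewire N x) g * Kk N M m g y"
    using g1 IH c0 by (intro mult_mono) auto
  also have "\<dots> \<le> (\<Sum>z\<in>networks N M. pmf (rewire N x) z * Kk N M m z y)"
    by (rule member_le_sum[OF gS]) (auto intro: mult_nonneg_nonneg Kk_nonneg finite_networks)
  finally show ?case by simp
qed

lemma averaging:
  fixes S :: "'a set" and w f :: "'a \<Rightarrow> real"
  assumes fin: "finite S" and wlb: "\<And>x. x \<in> S \<Longrightarrow> w x \<ge> \<delta>" and ws: "sum w S = 1"
    and fs: "sum f S = 1" and fb: "\<And>x. x \<in> S \<Longrightarrow> \<bar>f x - 1 / real (card S)\<bar> \<le> b"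
    and S: "S \<noteq> {}"
  shows "\<bar>(\<Sum>x\<in>S. w x * f x) - 1 / real (card S)\<bar> \<le> (1 - real (card S) * \<delta>) * b"
proof -
  let ?n = "real (card S)"
  have n0: "?n > 0" using fin S by (simp add: card_gt_0_iff)
  have "(\<Sum>x\<in>S. (w x - \<delta>) * (f x - 1 / ?n)) =
        (\<Sum>x\<in>S. w x * f x - w x / ?n - \<delta> * f x + \<delta> / ?n)"
    by (rule sum.cong) (simp_all add: algebra_simps diff_divide_distrib)
  also have "\<dots> = (\<Sum>x\<in>S. w x * f x) - (\<Sum>x\<in>S. w x) / ?n - \<delta> * (\<Sum>x\<in>S. f x) + ?n * (\<delta> / ?n)"
    by (simp add: sum.distrib sum_subtractf sum_distrib_left sum_divide_distrib)
  also have "\<dots> = (\<Sum>x\<in>S. w x * f x) - 1 / ?n"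
    using ws fs n0 by simp
  finally have eq: "(\<Sum>x\<in>S. w x * f x) - 1 / ?n = (\<Sum>x\<in>S. (w x - \<delta>) * (f x - 1 / ?n))" by simp
  have "\<bar>\<Sum>x\<in>S. (w x - \<delta>) * (f x - 1 / ?n)\<bar> \<le> (\<Sum>x\<in>S. \<bar>(w x - \<delta>) * (f x - 1 / ?n)\<bar>)"
    by (rule sum_abs)
  also have "\<dots> \<le> (\<Sum>x\<in>S. (w x - \<delta>) * b)"
  proof (rule sum_mono)
    fix x assume x: "x \<in> S"
    have "\<bar>(w x - \<delta>) * (f x - 1 / ?n)\<bar> = (w x - \<delta>) * \<bar>f x - 1 / ?n\<bar>"
      using wlb[OF x] by (simp add: abs_mult)
    also have "\<dots> \<le> (w x - \<delta>) * b" using wlb[OF x] fb[OF x] by (intro mult_left_mono) auto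
    finally show "\<bar>(w x - \<delta>) * (f x - 1 / ?n)\<bar> \<le> (w x - \<delta>) * b" .
  qed
  also have "\<dots> = (1 - ?n * \<delta>) * b"
    using ws by (simp add: sum_distrib_right sum_subtractf algebra_simps flip: sum_distrib_left)
  finally show ?thesis using eq by simp
qed




lemma networks_0: "networks N 0 = {{}}"
proof -
  have "{} \<in> networks N 0" unfolding networks_def by simp
  moreover have "E = {}" if "E \<in> networks N 0" for E using net_empty_iff[OF that] by simp
  ultimately show ?thesis by blast
qed

lemma iter_empty: "rewire_iter N {} t = return_pmf {}"
  by (induction t) (simp_all add: rewire_iter_def rewire_def bind_return_pmf)

theorem corollary3p4:
  fixes N M :: nat and G0 :: "nat set set"
  assumes "G0 \<in> networks N M"
  shows "\<forall>G \<in> networks N M.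
           (\<lambda>t. pmf (rewire_iter N G0 t) G) \<longlonglongrightarrow> 1 / real (card (networks N M))"
proof (cases "M = 0")
  case True
  hence G0: "G0 = {}" using assms networks_0 by blast
  show ?thesis using True by (simp add: networks_0 G0 iter_empty)
next
  case False
  hence M: "M > 0" by simp
  note G0 = assms
  define S where "S = networks N M"
  define n where "n = real (card S)"
  define p where "p t y = pmf (rewire_iter N G0 t) y" for t y
  define \<delta> where "\<delta> = (1 / (real M * real (card (node_pairs N) - M + 1))) ^ M"
  define q where "q = 1 - n * \<delta>"
  have fin: "finite S" unfolding S_def by (rule finite_networks)
  have Sne: "S \<noteq> {}" using G0 S_def by auto
  have n0: "n > 0" unfolding n_def using fin Sne by (simp add: card_gt_0_iff)
  have psum: "sum (p t) S = 1" for t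
    unfolding p_def S_def by (rule sum_pmf_eq_1[OF finite_networks iter_support[OF G0]])
  have Klb: "Kk N M M y x \<ge> \<delta>" if "y \<in> S" "x \<in> S" for x y
  proof -
    have "card (y - x) \<le> card y" using net_finite[of y N M] that S_def by (simp add: card_mono)
    also have "card y = M" using that S_def unfolding networks_def by simp
    finally show ?thesis unfolding \<delta>_def using doeblin[OF M] that S_def by simp
  qed
  have d0: "\<delta> > 0" unfolding \<delta>_def using M by simp
  have "n * \<delta> = (\<Sum>x\<in>S. \<delta>)" unfolding n_def by simp
  also have "\<dots> \<le> (\<Sum>x\<in>S. Kk N M M G0 x)" using Klb G0 S_def by (intro sum_mono) auto
  also have "\<dots> = 1" using Kk_sum G0 S_def by simp
  finally have nd: "n * \<delta> \<le> 1" .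
  have q0: "q \<ge> 0" and q1: "q < 1" unfolding q_def using nd n0 d0 by auto
  have stepM: "\<bar>p (t + M) y - 1 / n\<bar> \<le> q * b"
    if b: "\<And>x. x \<in> S \<Longrightarrow> \<bar>p t x - 1 / n\<bar> \<le> b" and y: "y \<in> S" for t b y
  proof -
    have "p (t + M) y = (\<Sum>x\<in>S. Kk N M M y x * p t x)"
      unfolding p_def S_def using iter_Kk[OF G0 M] y S_def by simp
    moreover have "\<bar>(\<Sum>x\<in>S. Kk N M M y x * p t x) - 1 / n\<bar> \<le> q * b"
      unfolding q_def n_def
      by (rule averaging[OF fin Klb[OF y] _ psum _ Sne])
         (use Kk_sum y S_def b n_def in auto)
    ultimately show ?thesis by simp
  qed
  have init: "\<bar>p t y - 1 / n\<bar> \<le> 1" for t y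
  proof -
    have "0 \<le> p t y" "p t y \<le> 1" unfolding p_def by (simp_all add: pmf_le_1)
    moreover have "card S \<ge> 1" using fin Sne by (simp add: Suc_le_eq card_gt_0_iff)
    hence "n \<ge> 1" unfolding n_def by simp
    moreover have "0 < 1 / n" "1 / n \<le> 1" using n0 \<open>n \<ge> 1\<close> by simp_all
    ultimately show ?thesis unfolding abs_le_iff by linarith
  qed
  have bound: "\<forall>y\<in>S. \<bar>p (j * M + r) y - 1 / n\<bar> \<le> q ^ j" for j r
  proof (induction j)
    case 0 thus ?case using init by simp
  next
    case (Suc j)
    have "\<bar>p (j * M + r + M) y - 1 / n\<bar> \<le> q * q ^ j" if "y \<in> S" for y
      using stepM[of "j * M + r" "q ^ j" y] Suc.IH that by blast
    thus ?case by (simp add: algebra_simps)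
  qed
  have bound2: "\<bar>p t y - 1 / n\<bar> \<le> q ^ (t div M)" if "y \<in> S" for t y
    using bound[of "t div M" "t mod M"] that by (simp add: div_mult_mod_eq)
  have qlim: "(\<lambda>t. q ^ (t div M)) \<longlonglongrightarrow> 0"
    using filterlim_compose[OF LIMSEQ_realpow_zero[OF q0 q1] filterlim_at_top_div_const_nat[OF M]] .
  show ?thesis
  proof
    fix G assume G: "G \<in> networks N M"
    have "(\<lambda>t. p t G - 1 / n) \<longlonglongrightarrow> 0"
      by (rule Lim_null_comparison[OF _ qlim]) (use bound2 G S_def in auto)
    hence "(\<lambda>t. (p t G - 1 / n) + 1 / n) \<longlonglongrightarrow> 0 + 1 / n" by (intro tendsto_add) auto
    thus "(\<lambda>t. pmf (rewire_iter N G0 t) G) \<longlonglongrightarrow> 1 / real (card (networks N M))"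
      unfolding p_def n_def S_def by simp
  qed
qed


end
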